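(* Let $G$ be a finite group and $k$ a continuous positive definite kernel on a compact set $\mathcal Z$ satisfying the eigendecay condition below with exponent $p>1$. Fix $\lambda>0$ and $T\in\mathbb N$, and let $\boldsymbol b_k=\{b_Z:Z\subset\mathcal Z,|Z|\le T\}$ with $b_Z(z)=\big(k(z,z)-k_Z(z)^\top(K_Z+\lambda I)^{-1}k_Z(z)\big)^{1/2}$. Let $\mathcal N_{k,\boldsymbol b}(\epsilon)$ be the $\epsilon$-covering number of $\boldsymbol b_k$ in the sup norm. Then $\log\mathcal N_{k,\boldsymbol b}(\epsilon)=O\Big(\big(\tfrac1{\epsilon^2|G|^p}\big)^{\frac2{p-1}}\big(1+\log\tfrac1\epsilon\big)\Big)$, with implied constant independent of $\epsilon$ and $|G|$.
   Context: Eigendecay condition: $k$ has a Mercer expansion $k(z,z')=\sum_{m\ge1}\lambda_m\phi_m(z)\phi_m(z')$ (with respect to a finite measure on $\mathcal Z$) with $\lambda_1\ge\lambda_2\ge\dots>0$, $\{\phi_m\}$ orthonormal in $L^2$, $\sup_{m,z}|\phi_m(z)|\le C_\phi$, and $\lambda_m\le C\,(m|G|)^{-p}$ for all $m$, for constants $C,C_\phi>0$, $p>1$. For $Z=\{z_1,\dots,z_t\}$: $k_Z(z)=[k(z,z_1),\dots,k(z,z_t)]^\top$, $K_Z=[k(z_i,z_j)]_{i,j=1}^t$. The $\epsilon$-covering number of a function class $\mathcal F$ is the smallest size of a subset $\mathcal C\subseteq\mathcal F$ such that every $f\in\mathcal F$ has some $g\in\mathcal C$ with $\sup_z|f(z)-g(z)|\le\epsilon$.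 *)

theory Defs
  imports "HOL-Analysis.Analysis" "HOL-Algebra.Group"
    "Jordan_Normal_Form.Gauss_Jordan_Elimination"
begin

definition pd_kernel :: "'a set \<Rightarrow> ('a \<Rightarrow> 'a \<Rightarrow> real) \<Rightarrow> bool" where
  "pd_kernel D k \<longleftrightarrow> (\<forall>x\<in>D. \<forall>y\<in>D. k x y = k y x) \<and>
     (\<forall>xs c. set xs \<subseteq> D \<longrightarrow>
        (\<Sum>i<length xs. \<Sum>j<length xs. c i * c j * k (xs!i) (xs!j)) \<ge> 0)"

text \<open>Mercer expansion with eigendecay (eigen-indices m = 1,2,... shifted to 0,1,...),
  with respect to a finite measure mu on D.\<close>
definition eigendecay :: "'a set \<Rightarrow> 'a measure \<Rightarrow> ('a \<Rightarrow> 'a \<Rightarrow> real) \<Rightarrow> (nat \<Rightarrow> real)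
    \<Rightarrow> (nat \<Rightarrow> 'a \<Rightarrow> real) \<Rightarrow> real \<Rightarrow> real \<Rightarrow> real \<Rightarrow> nat \<Rightarrow> bool" where
  "eigendecay D mu k lam phi C Cphi p g \<longleftrightarrow>
     finite_measure mu \<and> space mu = D \<and>
     (\<forall>m. phi m \<in> borel_measurable mu) \<and>
     (\<forall>i j. integrable mu (\<lambda>z. phi i z * phi j z) \<and>
            (\<integral>z. phi i z * phi j z \<partial>mu) = (if i = j then 1 else 0)) \<and>
     (\<forall>z\<in>D. \<forall>z'\<in>D. (\<lambda>m. lam m * phi m z * phi m z') sums k z z') \<and>
     (\<forall>m. lam (Suc m) \<le> lam m) \<and> (\<forall>m. lam m > 0) \<and>
     (\<forall>m. \<forall>z\<in>D. \<bar>phi m z\<bar> \<le> Cphi) \<and>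
     (\<forall>m. lam m \<le> C * (real (Suc m) * real g) powr (- p))"

definition kvec :: "('a \<Rightarrow> 'a \<Rightarrow> real) \<Rightarrow> 'a list \<Rightarrow> 'a \<Rightarrow> real vec" where
  "kvec k zs z = vec (length zs) (\<lambda>i. k z (zs!i))"

definition kmat :: "('a \<Rightarrow> 'a \<Rightarrow> real) \<Rightarrow> 'a list \<Rightarrow> real mat" where
  "kmat k zs = mat (length zs) (length zs) (\<lambda>(i,j). k (zs!i) (zs!j))"

definition post_sd :: "('a \<Rightarrow> 'a \<Rightarrow> real) \<Rightarrow> real \<Rightarrow> 'a list \<Rightarrow> 'a \<Rightarrow> real" where
  "post_sd k reg zs z = sqrt (k z z - scalar_prod (kvec k zs z)
      (mult_mat_vec (the (mat_inverse (kmat k zs + reg \<cdot>\<^sub>m 1\<^sub>m (length zs)))) (kvec k zs z)))"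

definition post_sd_class :: "'a set \<Rightarrow> ('a \<Rightarrow> 'a \<Rightarrow> real) \<Rightarrow> real \<Rightarrow> nat \<Rightarrow> ('a \<Rightarrow> real) set" where
  "post_sd_class D k reg T = {post_sd k reg zs | zs. distinct zs \<and> set zs \<subseteq> D \<and> length zs \<le> T}"

text \<open>epsilon-covering number in sup norm over D (infinity if no finite cover exists).\<close>
definition covering_number :: "('a \<Rightarrow> real) set \<Rightarrow> 'a set \<Rightarrow> real \<Rightarrow> enat" where
  "covering_number F D eps = Inf ((\<lambda>Cv. enat (card Cv)) `
     {Cv. Cv \<subseteq> F \<and> finite Cv \<and> (\<forall>f\<in>F. \<exists>g\<in>Cv. \<forall>z\<in>D. \<bar>f z - g z\<bar> \<le> eps)})"

end

theory Submission
  imports Defs "Jordan_Normal_Form.Determinant"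
begin

lemma kmat_reg_index:
  assumes "i < length zs" "j < length zs"
  shows "(kmat k zs + reg \<cdot>\<^sub>m 1\<^sub>m (length zs)) $$ (i,j) = k (zs!i) (zs!j) + (if i = j then reg else 0)"
  using assms by (simp add: kmat_def)

lemma kmat_reg_carrier: "kmat k zs + reg \<cdot>\<^sub>m 1\<^sub>m (length zs) \<in> carrier_mat (length zs) (length zs)"
  by (simp add: kmat_def)

lemma quad_form_expand:
  fixes c :: "nat \<Rightarrow> real"
  assumes "n = length zs"
  shows "(\<Sum>i<n. c i * (\<Sum>l<n. (kmat k zs + reg \<cdot>\<^sub>m 1\<^sub>m n) $$ (i,l) * c l))
     = (\<Sum>i<n. \<Sum>l<n. c i * c l * k (zs!i) (zs!l)) + reg * (\<Sum>i<n. (c i)\<^sup>2)"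
proof -
  have "(\<Sum>i<n. c i * (\<Sum>l<n. (kmat k zs + reg \<cdot>\<^sub>m 1\<^sub>m n) $$ (i,l) * c l))
     = (\<Sum>i<n. (\<Sum>l<n. c i * c l * k (zs!i) (zs!l)) + reg * (c i)\<^sup>2)"
  proof (rule sum.cong[OF refl])
    fix i assume i: "i \<in> {..<n}"
    have "(\<Sum>l<n. (kmat k zs + reg \<cdot>\<^sub>m 1\<^sub>m n) $$ (i,l) * c l)
        = (\<Sum>l<n. k (zs!i) (zs!l) * c l + (if i = l then reg * c l else 0))"
      using i assms by (intro sum.cong refl) (simp only: kmat_reg_index lessThan_iff, simp add: algebra_simps)
    also have "\<dots> = (\<Sum>l<n. k (zs!i) (zs!l) * c l) + reg * c i"
      using i by (simp add: sum.distrib)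
    finally show "c i * (\<Sum>l<n. (kmat k zs + reg \<cdot>\<^sub>m 1\<^sub>m n) $$ (i,l) * c l)
       = (\<Sum>l<n. c i * c l * k (zs!i) (zs!l)) + reg * (c i)\<^sup>2"
      by (simp add: sum_distrib_left algebra_simps power2_eq_square)
  qed
  also have "\<dots> = (\<Sum>i<n. \<Sum>l<n. c i * c l * k (zs!i) (zs!l)) + reg * (\<Sum>i<n. (c i)\<^sup>2)"
    by (simp add: sum.distrib sum_distrib_left)
  finally show ?thesis .
qed

lemma pd_quad_nonneg:
  fixes c :: "nat \<Rightarrow> real"
  assumes "pd_kernel D k" "set zs \<subseteq> D"
  shows "(\<Sum>i<length zs. \<Sum>l<length zs. c i * c l * k (zs!i) (zs!l)) \<ge> 0"
  using assms unfolding pd_kernel_def by blast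

lemma inverse_exists:
  assumes pd: "pd_kernel D k" and sub: "set zs \<subseteq> D" and reg: "reg > (0::real)"
  shows "\<exists>W. mat_inverse (kmat k zs + reg \<cdot>\<^sub>m 1\<^sub>m (length zs)) = Some W \<and>
     W \<in> carrier_mat (length zs) (length zs) \<and>
     (kmat k zs + reg \<cdot>\<^sub>m 1\<^sub>m (length zs)) * W = 1\<^sub>m (length zs)"
proof -
  define n where "n = length zs"
  define A where "A = kmat k zs + reg \<cdot>\<^sub>m 1\<^sub>m n"
  have A: "A \<in> carrier_mat n n" unfolding A_def n_def by (rule kmat_reg_carrier)
  have "Determinant.det A \<noteq> 0"
  proof
    assume "Determinant.det A = 0"
    then obtain v where v: "v \<in> carrier_vec n" "v \<noteq> 0\<^sub>v n" "A *\<^sub>v v = 0\<^sub>v n"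
      using det_0_iff_vec_prod_zero[OF A] by auto
    define c where "c i = v $ i" for i
    have row0: "(\<Sum>l<n. A $$ (i,l) * c l) = 0" if "i < n" for i
    proof -
      have "(A *\<^sub>v v) $ i = 0" using v(3) that by simp
      then show ?thesis using that A v(1)
        by (auto simp: scalar_prod_def c_def lessThan_atLeast0 row_def)
    qed
    have "(\<Sum>i<n. c i * (\<Sum>l<n. A $$ (i,l) * c l)) = 0"
      using row0 by simp
    then have "(\<Sum>i<n. \<Sum>l<n. c i * c l * k (zs!i) (zs!l)) + reg * (\<Sum>i<n. (c i)\<^sup>2) = 0"
      unfolding A_def using quad_form_expand[OF n_def] by simp
    moreover have "(\<Sum>i<n. \<Sum>l<n. c i * c l * k (zs!i) (zs!l)) \<ge> 0"
      using pd_quad_nonneg[OF pd sub] n_def by simp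
    ultimately have "reg * (\<Sum>i<n. (c i)\<^sup>2) \<le> 0" by linarith
    with reg have s0: "(\<Sum>i<n. (c i)\<^sup>2) \<le> 0"
      by (simp add: mult_le_0_iff)
    have "\<forall>i\<in>{..<n}. (c i)\<^sup>2 = 0"
      using sum_nonneg_eq_0_iff[of "{..<n}" "\<lambda>i. (c i)\<^sup>2"] s0
      by (metis finite_lessThan order_antisym_conv sum_nonneg zero_le_power2)
    then have "v = 0\<^sub>v n" using v(1) by (auto simp: c_def intro!: eq_vecI)
    with v(2) show False by simp
  qed
  then have "A \<in> Units (ring_mat TYPE(real) n ())" by (rule det_non_zero_imp_unit[OF A])
  then obtain W where W: "mat_inverse A = Some W"
    using mat_inverse(1)[OF A, of "()"] by (cases "mat_inverse A") auto
  from mat_inverse(2)[OF A W] W show ?thesis unfolding A_def n_def by blast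
qed

lemma W_bound:
  assumes pd: "pd_kernel D k" and sub: "set zs \<subseteq> D" and reg: "reg > (0::real)"
    and W: "W \<in> carrier_mat (length zs) (length zs)"
    and AW: "(kmat k zs + reg \<cdot>\<^sub>m 1\<^sub>m (length zs)) * W = 1\<^sub>m (length zs)"
    and i: "i < length zs" and j: "j < length zs"
  shows "\<bar>W $$ (i,j)\<bar> \<le> 1 / reg"
proof -
  define n where "n = length zs"
  define A where "A = kmat k zs + reg \<cdot>\<^sub>m 1\<^sub>m n"
  have A: "A \<in> carrier_mat n n" unfolding A_def n_def by (rule kmat_reg_carrier)
  define c where "c l = W $$ (l,j)" for l
  have row: "(\<Sum>l<n. A $$ (i',l) * c l) = (if i' = j then 1 else 0)" if "i' < n" for i'
  proof -
    have "(A * W) $$ (i',j) = (if i' = j then 1 else 0)"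
      using AW that j unfolding A_def n_def by simp
    then show ?thesis using that j A W
      by (auto simp: scalar_prod_def c_def lessThan_atLeast0 row_def col_def n_def)
  qed
  have "(\<Sum>i'<n. c i' * (\<Sum>l<n. A $$ (i',l) * c l)) = (\<Sum>i'<n. if i' = j then c i' else 0)"
    using row by (intro sum.cong) auto
  also have "\<dots> = c j" using j n_def by simp
  finally have "(\<Sum>i<n. \<Sum>l<n. c i * c l * k (zs!i) (zs!l)) + reg * (\<Sum>i<n. (c i)\<^sup>2) = c j"
    unfolding A_def using quad_form_expand[OF n_def] by simp
  moreover have "(\<Sum>i<n. \<Sum>l<n. c i * c l * k (zs!i) (zs!l)) \<ge> 0"
    using pd_quad_nonneg[OF pd sub] n_def by simp
  ultimately have S: "reg * (\<Sum>i<n. (c i)\<^sup>2) \<le> c j" by linarith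
  have ci: "(c l)\<^sup>2 \<le> (\<Sum>i<n. (c i)\<^sup>2)" if "l < n" for l
    using that by (intro member_le_sum) auto
  have cj0: "c j \<ge> 0" using S reg by (smt (verit) ci j n_def mult_nonneg_nonneg zero_le_power2)
  have "reg * (c j)\<^sup>2 \<le> c j" using S ci[of j] j n_def reg
    by (smt (verit) mult_left_mono)
  then have cj: "c j \<le> 1 / reg"
  proof (cases "c j = 0")
    case True then show ?thesis using reg by simp
  next
    case False
    then have pos: "c j > 0" using cj0 by simp
    have "c j * (reg * c j) \<le> c j * 1"
      using \<open>reg * (c j)\<^sup>2 \<le> c j\<close> by (simp add: power2_eq_square algebra_simps)
    then have "reg * c j \<le> 1" using pos mult_le_cancel_left_pos by blast
    then show ?thesis using reg by (simp add: field_simps)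
  qed
  have "reg * (c i)\<^sup>2 \<le> c j" using S ci[of i] i n_def reg
    by (smt (verit) mult_left_mono)
  then have "reg * (c i)\<^sup>2 \<le> 1 / reg" using cj by linarith
  then have "(c i)\<^sup>2 \<le> (1/reg)\<^sup>2" using reg
    by (simp add: power2_eq_square field_simps)
  then have "\<bar>c i\<bar> \<le> \<bar>1/reg\<bar>" using abs_le_square_iff by blast
  then show ?thesis using reg by (simp add: c_def)
qed

lemma quad_expand:
  assumes W: "W \<in> carrier_mat (length zs) (length zs)"
  shows "scalar_prod (kvec k zs z) (mult_mat_vec W (kvec k zs z))
    = (\<Sum>i<length zs. \<Sum>j<length zs. k z (zs!i) * W $$ (i,j) * k z (zs!j))"
  using W
  by (auto simp: scalar_prod_def kvec_def lessThan_atLeast0 row_def sum_distrib_left mult.assoc intro!: sum.cong)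


lemma powr_step:
  fixes p y :: real
  assumes p: "p > 1" and y: "y \<ge> 1"
  shows "(y+1) powr (-p) \<le> (y powr (1-p) - (y+1) powr (1-p)) / (p-1)"
proof -
  have "\<exists>z>y. z < y+1 \<and> (y+1) powr (1-p) - y powr (1-p) = ((y+1) - y) * ((1-p) * z powr (-p))"
  proof (rule MVT2)
    fix x assume "y \<le> x" "x \<le> y + 1"
    then have "x > 0" using y by simp
    from has_real_derivative_powr[OF this, of "1-p"]
    show "((\<lambda>a. a powr (1-p)) has_real_derivative (1-p) * x powr (-p)) (at x)" by simp
  qed simp
  then obtain z where z: "z > y" "z < y+1" "(y+1) powr (1-p) - y powr (1-p) = (1-p) * z powr (-p)"
    by auto
  have "(y+1) powr (-p) \<le> z powr (-p)"
    using z y p by (intro powr_mono2') auto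
  then have "(p-1) * (y+1) powr (-p) \<le> y powr (1-p) - (y+1) powr (1-p)"
  proof -
    have "(p-1) * (y+1) powr (-p) \<le> (p-1) * z powr (-p)"
      using \<open>(y+1) powr (-p) \<le> z powr (-p)\<close> p by (intro mult_left_mono) auto
    also have "\<dots> = y powr (1-p) - (y+1) powr (1-p)" using z(3) by (simp add: algebra_simps)
    finally show ?thesis .
  qed
  then show ?thesis using p by (simp add: field_simps)
qed

lemma tail_sum:
  fixes p :: real
  assumes p: "p > 1"
  shows "summable (\<lambda>m. (real (m+M) + 1) powr (-p)) \<and>
         (\<Sum>m. (real (m+M) + 1) powr (-p)) \<le> 2 powr p * (real M + 1) powr (1-p) / (p-1)"
proof -
  define h where "h m = (real (m+M) + 1) powr (1-p)" for m
  have h0: "h \<longlonglongrightarrow> 0"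
    unfolding h_def using p
  proof (intro tendsto_neg_powr)
    show "filterlim (\<lambda>m. real (m+M) + 1) at_top sequentially"
      by (rule filterlim_at_top_mono[OF filterlim_real_sequentially]) auto
  qed (use p in auto)
  have tel: "(\<lambda>m. h m - h (Suc m)) sums (h 0)"
    using telescope_sums'[OF h0] by simp
  define g where "g m = 2 powr p / (p-1) * (h m - h (Suc m))" for m
  have gs: "g sums (2 powr p / (p-1) * h 0)"
    unfolding g_def by (intro sums_mult tel)
  have bound: "(real (m+M) + 1) powr (-p) \<le> g m" for m
  proof -
    define y where "y = real (m+M) + 1"
    have y1: "y \<ge> 1" unfolding y_def by simp
    have "y powr (-p) = 2 powr p * (2*y) powr (-p)"
      using y1 by (simp add: powr_mult powr_minus field_simps)
    also have "(2*y) powr (-p) \<le> (y+1) powr (-p)"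
      using y1 p by (intro powr_mono2') auto
    also have "(y+1) powr (-p) \<le> (y powr (1-p) - (y+1) powr (1-p)) / (p-1)"
      by (rule powr_step[OF p y1])
    finally have "y powr (-p) \<le> 2 powr p * ((y powr (1-p) - (y+1) powr (1-p)) / (p-1))"
      by simp
    moreover have "h m = y powr (1-p)" "h (Suc m) = (y+1) powr (1-p)"
      unfolding h_def y_def by (auto simp: add.commute add.left_commute)
    ultimately show ?thesis unfolding g_def y_def by (simp add: field_simps)
  qed
  have summ: "summable (\<lambda>m. (real (m+M) + 1) powr (-p))"
    by (rule summable_comparison_test'[of g 0]) (use gs bound in \<open>auto simp: sums_iff\<close>)
  have "(\<Sum>m. (real (m+M) + 1) powr (-p)) \<le> (\<Sum>m. g m)"
    by (rule suminf_le) (use bound summ gs in \<open>auto simp: sums_iff\<close>)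
  also have "\<dots> = 2 powr p / (p-1) * h 0" using gs by (simp add: sums_iff)
  finally show ?thesis using summ by (simp add: h_def)
qed

lemma lam_bound:
  assumes ed: "eigendecay D mu k lam phi C Cphi p g" and p: "p > 1" and g: "g \<ge> 1"
  shows "lam m \<le> C * real g powr (-p) * (real m + 1) powr (-p)"
proof -
  have "lam m \<le> C * (real (Suc m) * real g) powr (- p)" using ed unfolding eigendecay_def by blast
  also have "(real (Suc m) * real g) powr (- p) = real g powr (-p) * (real m + 1) powr (-p)"
    by (simp add: powr_mult add.commute)
  finally show ?thesis by (simp add: mult.assoc)
qed

lemma mercer_tail:
  assumes ed: "eigendecay D mu k lam phi C Cphi p g" and p: "p > 1" and C: "C > 0"
    and g: "g \<ge> 1" and z: "z \<in> D" and z': "z' \<in> D"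
  shows "\<bar>k z z' - (\<Sum>m<M. lam m * phi m z * phi m z')\<bar>
     \<le> Cphi\<^sup>2 * C * real g powr (-p) * (2 powr p * (real M + 1) powr (1-p) / (p-1))"
proof -
  define f where "f m = lam m * phi m z * phi m z'" for m
  have "f sums k z z'" using ed z z' unfolding eigendecay_def f_def by blast
  then have sp: "(\<lambda>i. f (i+M)) sums (k z z' - (\<Sum>m<M. f m))"
    by (rule sums_split_initial_segment)
  define K0 where "K0 = Cphi\<^sup>2 * C * real g powr (-p)"
  define b where "b i = K0 * (real (i+M) + 1) powr (-p)" for i
  from tail_sum[OF p, of M] have ts: "summable (\<lambda>m. (real (m+M) + 1) powr (-p))"
    "(\<Sum>m. (real (m+M) + 1) powr (-p)) \<le> 2 powr p * (real M + 1) powr (1-p) / (p-1)" by auto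
  have bs: "summable b" unfolding b_def by (intro summable_mult ts(1))
  have lampos: "lam m > 0" for m using ed unfolding eigendecay_def by blast
  have phib: "\<bar>phi m x\<bar> \<le> Cphi" if "x \<in> D" for m x using ed that unfolding eigendecay_def by blast
  have Cphi0: "0 \<le> Cphi" using phib[OF z, of 0] by (metis abs_ge_zero order_trans)
  have fb: "norm (f (i+M)) \<le> b i" for i
  proof -
    have "\<bar>f (i+M)\<bar> = lam (i+M) * (\<bar>phi (i+M) z\<bar> * \<bar>phi (i+M) z'\<bar>)"
      using lampos[of "i+M"] by (simp add: f_def abs_mult)
    also have "\<dots> \<le> lam (i+M) * (Cphi * Cphi)"
      using lampos[of "i+M"] phib[OF z] phib[OF z'] Cphi0
      by (intro mult_left_mono mult_mono) auto
    also have "\<dots> \<le> (C * real g powr (-p) * (real (i+M) + 1) powr (-p)) * (Cphi * Cphi)"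
      using lam_bound[OF ed p g, of "i+M"] by (intro mult_right_mono) auto
    also have "\<dots> = b i" by (simp add: b_def K0_def power2_eq_square algebra_simps)
    finally show ?thesis by simp
  qed
  have "\<bar>k z z' - (\<Sum>m<M. f m)\<bar> = norm (\<Sum>i. f (i+M))" using sp by (simp add: sums_iff)
  also have "\<dots> \<le> (\<Sum>i. b i)" by (rule norm_suminf_le[OF fb bs])
  also have "\<dots> = K0 * (\<Sum>m. (real (m+M) + 1) powr (-p))" unfolding b_def
    by (rule suminf_mult[OF ts(1)])
  also have "\<dots> \<le> K0 * (2 powr p * (real M + 1) powr (1-p) / (p-1))"
    using ts(2) C by (intro mult_left_mono) (auto simp: K0_def)
  finally show ?thesis by (simp add: K0_def f_def)
qed

lemma sum_identity:
  fixes x :: "nat \<Rightarrow> real"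
  shows "(\<Sum>i<t. \<Sum>j<t. (\<Sum>m<M. x m * B m i) * W i j * (\<Sum>n<M. x n * B n j))
    = (\<Sum>m<M. \<Sum>n<M. x m * x n * (\<Sum>i<t. \<Sum>j<t. B m i * W i j * B n j))"
proof -
  have "(\<Sum>i<t. \<Sum>j<t. (\<Sum>m<M. x m * B m i) * W i j * (\<Sum>n<M. x n * B n j))
     = (\<Sum>i<t. \<Sum>j<t. \<Sum>m<M. \<Sum>n<M. x m * x n * (B m i * W i j * B n j))"
    by (simp add: sum_distrib_left sum_distrib_right mult_ac)
  also have "\<dots> = (\<Sum>i<t. \<Sum>m<M. \<Sum>j<t. \<Sum>n<M. x m * x n * (B m i * W i j * B n j))"
    by (simp add: sum.swap[of _ "{..<t}" "{..<M}"])
  also have "\<dots> = (\<Sum>m<M. \<Sum>i<t. \<Sum>n<M. \<Sum>j<t. x m * x n * (B m i * W i j * B n j))"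
    by (subst sum.swap) (simp add: sum.swap[of _ "{..<t}" "{..<M}"])
  also have "\<dots> = (\<Sum>m<M. \<Sum>n<M. \<Sum>i<t. \<Sum>j<t. x m * x n * (B m i * W i j * B n j))"
    by (simp add: sum.swap[of _ "{..<t}" "{..<M}"])
  also have "\<dots> = (\<Sum>m<M. \<Sum>n<M. x m * x n * (\<Sum>i<t. \<Sum>j<t. B m i * W i j * B n j))"
    by (simp add: sum_distrib_left)
  finally show ?thesis .
qed
lemma quad_perturb:
  fixes a b :: "nat \<Rightarrow> real" and W :: "nat \<Rightarrow> nat \<Rightarrow> real"
  assumes Wb: "\<And>i j. i < t \<Longrightarrow> j < t \<Longrightarrow> \<bar>W i j\<bar> \<le> w"
    and ab: "\<And>i. i < t \<Longrightarrow> \<bar>a i\<bar> \<le> \<kappa>"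
    and dab: "\<And>i. i < t \<Longrightarrow> \<bar>a i - b i\<bar> \<le> \<rho>"
    and rk: "\<rho> \<le> \<kappa>"
  shows "\<bar>(\<Sum>i<t. \<Sum>j<t. a i * W i j * a j) - (\<Sum>i<t. \<Sum>j<t. b i * W i j * b j)\<bar>
     \<le> real t * real t * (w * (3 * \<kappa> * \<rho>))"
proof -
  have trm: "\<bar>a i * W i j * a j - b i * W i j * b j\<bar> \<le> w * (3 * \<kappa> * \<rho>)"
    if i: "i < t" and j: "j < t" for i j
  proof -
    have r0: "\<rho> \<ge> 0" using dab[OF i] by linarith
    have bi: "\<bar>b i\<bar> \<le> 2 * \<kappa>" using ab[OF i] dab[OF i] rk by linarith
    have "\<bar>a i * a j - b i * b j\<bar> = \<bar>(a i - b i) * a j + b i * (a j - b j)\<bar>"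
      by (simp add: algebra_simps)
    also have "\<dots> \<le> \<bar>a i - b i\<bar> * \<bar>a j\<bar> + \<bar>b i\<bar> * \<bar>a j - b j\<bar>"
      by (simp add: abs_mult abs_triangle_ineq[THEN order_trans])
    also have "\<dots> \<le> \<rho> * \<kappa> + (2*\<kappa>) * \<rho>"
      using ab[OF j] dab[OF i] dab[OF j] bi r0
      by (intro add_mono mult_mono) auto
    finally have x: "\<bar>a i * a j - b i * b j\<bar> \<le> 3 * \<kappa> * \<rho>" by simp
    have "\<bar>a i * W i j * a j - b i * W i j * b j\<bar> = \<bar>W i j\<bar> * \<bar>a i * a j - b i * b j\<bar>"
      by (simp add: abs_mult[symmetric] algebra_simps)
    also have "\<dots> \<le> w * (3 * \<kappa> * \<rho>)"
      using Wb[OF i j] x by (intro mult_mono) auto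
    finally show ?thesis .
  qed
  have "\<bar>(\<Sum>i<t. \<Sum>j<t. a i * W i j * a j) - (\<Sum>i<t. \<Sum>j<t. b i * W i j * b j)\<bar>
      = \<bar>\<Sum>i<t. \<Sum>j<t. (a i * W i j * a j - b i * W i j * b j)\<bar>"
    by (simp add: sum_subtractf)
  also have "\<dots> \<le> (\<Sum>i<t. \<Sum>j<t. \<bar>a i * W i j * a j - b i * W i j * b j\<bar>)"
    by (rule order_trans[OF sum_abs]) (intro sum_mono sum_abs)
  also have "\<dots> \<le> (\<Sum>i<t. \<Sum>j<t. w * (3 * \<kappa> * \<rho>))"
    using trm by (intro sum_mono) auto
  also have "\<dots> = real t * real t * (w * (3 * \<kappa> * \<rho>))" by simp
  finally show ?thesis .
qed
lemma sqrt_diff_bound: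
  fixes a b :: real
  shows "\<bar>sqrt a - sqrt b\<bar> \<le> sqrt (2 * \<bar>a - b\<bar>)"
proof -
  have key: "\<bar>sqrt a - sqrt b\<bar> \<le> sqrt (2 * \<bar>a - b\<bar>)" if ab: "b \<le> a" for a b :: real
  proof (cases "b \<ge> 0")
    case True
    then have "sqrt a - sqrt b \<le> sqrt (a - b)"
      using ab by (smt (verit) real_sqrt_le_mono sqrt_add_le_add_sqrt)
    moreover have "sqrt (a - b) \<le> sqrt (2 * \<bar>a - b\<bar>)" by (intro real_sqrt_le_mono) (simp add: abs_if)
    moreover have "sqrt b \<le> sqrt a" using ab by simp
    ultimately show ?thesis by (smt (verit))
  next
    case False
    show ?thesis
    proof (cases "a \<ge> 0")
      case True
      have sb: "sqrt b = - sqrt (-b)" by (simp add: real_sqrt_minus)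
      have "sqrt a + sqrt (-b) \<le> sqrt (2 * (a + (-b)))"
      proof -
        have "(sqrt a + sqrt (-b))\<^sup>2 \<le> 2 * (a + (-b))"
          using True False by (smt (verit) power2_sum real_sqrt_pow2 sum_squares_bound
              real_sqrt_ge_zero mult_nonneg_nonneg)
        then show ?thesis using True False
          by (metis real_le_rsqrt)
      qed
      then show ?thesis using True False ab sb by simp
    next
      case False2: False
      have sa: "sqrt a = - sqrt (-a)" "sqrt b = - sqrt (-b)" by (simp_all add: real_sqrt_minus)
      have "sqrt (-b) - sqrt (-a) \<le> sqrt (-b - (-a))"
        using ab False2 by (smt (verit) real_sqrt_le_mono sqrt_add_le_add_sqrt)
      moreover have "sqrt (-b - (-a)) \<le> sqrt (2 * \<bar>a - b\<bar>)" by (intro real_sqrt_le_mono) (simp add: abs_if)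
      moreover have "sqrt (-a) \<le> sqrt (-b)" using ab by simp
      ultimately show ?thesis using sa by (smt (verit))
    qed
  qed
  show ?thesis
  proof (cases "b \<le> a")
    case True then show ?thesis by (rule key)
  next
    case False
    then have "\<bar>sqrt b - sqrt a\<bar> \<le> sqrt (2 * \<bar>b - a\<bar>)" by (intro key) simp
    then show ?thesis by (simp add: abs_minus_commute)
  qed
qed

lemma powr_le1:
  fixes x a :: real
  assumes "x \<ge> 1" "a \<le> 0"
  shows "x powr a \<le> 1"
proof -
  have "x powr a \<le> x powr 0" using assms by (intro powr_mono) auto
  then show ?thesis using assms by simp
qed

lemma gp_le:
  assumes g: "g \<ge> (1::nat)" and p: "p > (1::real)"
  shows "real g powr (-p) \<le> 1"
proof -
  have "1 \<le> real g powr p" using g p by (intro ge_one_powr_ge_zero) auto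
  then show ?thesis by (simp add: powr_minus inverse_le_1_iff)
qed

lemma zs_approx:
  fixes M :: nat
  assumes ed: "eigendecay D mu k lam phi C Cphi p g" and p: "p > 1" and C: "C > 0"
    and g: "g \<ge> 1" and pd: "pd_kernel D k" and sub: "set zs \<subseteq> D" and reg: "reg > 0"
    and z: "z \<in> D" and T: "length zs \<le> T"
  defines "W \<equiv> the (mat_inverse (kmat k zs + reg \<cdot>\<^sub>m 1\<^sub>m (length zs)))"
  defines "Q \<equiv> \<lambda>m n. \<Sum>i<length zs. \<Sum>j<length zs. (lam m * phi m (zs!i)) * W $$ (i,j) * (lam n * phi n (zs!j))"
  defines "\<kappa>0 \<equiv> Cphi\<^sup>2 * C * (2 powr p / (p-1))"
  defines "\<rho> \<equiv> Cphi\<^sup>2 * C * real g powr (-p) * (2 powr p * (real M + 1) powr (1-p) / (p-1))"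
  shows "\<bar>scalar_prod (kvec k zs z) (mult_mat_vec W (kvec k zs z)) - (\<Sum>m<M. \<Sum>n<M. phi m z * phi n z * Q m n)\<bar>
     \<le> real T * real T * ((1/reg) * (3 * \<kappa>0 * \<rho>))"
proof -
  define t where "t = length zs"
  obtain W' where W': "mat_inverse (kmat k zs + reg \<cdot>\<^sub>m 1\<^sub>m (length zs)) = Some W'"
      "W' \<in> carrier_mat t t" "(kmat k zs + reg \<cdot>\<^sub>m 1\<^sub>m (length zs)) * W' = 1\<^sub>m (length zs)"
    using inverse_exists[OF pd sub reg] t_def by blast
  have WW: "W = W'" using W' unfolding W_def by simp
  have Wc: "W \<in> carrier_mat t t" using W' WW by simp
  have Wb: "\<bar>W $$ (i,j)\<bar> \<le> 1/reg" if "i < t" "j < t" for i j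
    using W_bound[OF pd sub reg, of W' i j] W' WW that t_def by simp
  define a where "a i = k z (zs!i)" for i
  define b where "b i = (\<Sum>m<M. lam m * phi m z * phi m (zs!i))" for i
  have gp: "real g powr (-p) \<le> 1" using gp_le[OF g p] .
  have gp0: "real g powr (-p) \<ge> 0" by simp
  have Mp: "(real M + 1) powr (1-p) \<le> 1" using p by (intro powr_le1) auto
  have k0: "\<kappa>0 \<ge> 0" unfolding \<kappa>0_def using C p by simp
  have rk: "\<rho> \<le> \<kappa>0"
  proof -
    have "real g powr (-p) * (2 powr p * (real M + 1) powr (1-p) / (p-1)) \<le> 1 * (2 powr p * 1 / (p-1))"
      using gp Mp p by (intro mult_mono divide_right_mono mult_left_mono) auto
    then show ?thesis unfolding \<rho>_def \<kappa>0_def using C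
      by (smt (verit, ccfv_SIG) mult.assoc mult_left_mono zero_le_power2 mult_nonneg_nonneg)
  qed
  have zi: "zs!i \<in> D" if "i < t" for i using sub that t_def by auto
  have ab: "\<bar>a i\<bar> \<le> \<kappa>0" if "i < t" for i
  proof -
    have "\<bar>k z (zs!i) - (\<Sum>m<0. lam m * phi m z * phi m (zs!i))\<bar>
      \<le> Cphi\<^sup>2 * C * real g powr (-p) * (2 powr p * (real 0 + 1) powr (1-p) / (p-1))"
      by (rule mercer_tail[OF ed p C g z zi[OF that]])
    also have "\<dots> \<le> Cphi\<^sup>2 * C * 1 * (2 powr p / (p-1))"
      using gp C p by (intro mult_mono mult_left_mono) auto
    finally show ?thesis unfolding a_def \<kappa>0_def by simp
  qed
  have dab: "\<bar>a i - b i\<bar> \<le> \<rho>" if "i < t" for i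
    unfolding a_def b_def \<rho>_def by (rule mercer_tail[OF ed p C g z zi[OF that]])
  have qp: "\<bar>(\<Sum>i<t. \<Sum>j<t. a i * W $$ (i,j) * a j) - (\<Sum>i<t. \<Sum>j<t. b i * W $$ (i,j) * b j)\<bar>
     \<le> real t * real t * ((1/reg) * (3 * \<kappa>0 * \<rho>))"
    by (rule quad_perturb[where W="\<lambda>i j. W $$ (i,j)"]) (use Wb ab dab rk in auto)
  have e1: "scalar_prod (kvec k zs z) (mult_mat_vec W (kvec k zs z)) = (\<Sum>i<t. \<Sum>j<t. a i * W $$ (i,j) * a j)"
    using quad_expand[of W zs k z] Wc t_def a_def by simp
  have e2: "(\<Sum>i<t. \<Sum>j<t. b i * W $$ (i,j) * b j) = (\<Sum>m<M. \<Sum>n<M. phi m z * phi n z * Q m n)"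
  proof -
    have "(\<Sum>i<t. \<Sum>j<t. b i * W $$ (i,j) * b j)
       = (\<Sum>i<t. \<Sum>j<t. (\<Sum>m<M. phi m z * (lam m * phi m (zs!i))) * W $$ (i,j) * (\<Sum>n<M. phi n z * (lam n * phi n (zs!j))))"
      unfolding b_def by (simp add: mult_ac)
    also have "\<dots> = (\<Sum>m<M. \<Sum>n<M. phi m z * phi n z * Q m n)"
      unfolding Q_def t_def by (rule sum_identity)
    finally show ?thesis .
  qed
  have "real t * real t * ((1/reg) * (3 * \<kappa>0 * \<rho>)) \<le> real T * real T * ((1/reg) * (3 * \<kappa>0 * \<rho>))"
  proof (intro mult_right_mono mult_mono)
    have "\<rho> \<ge> 0" unfolding \<rho>_def using C p by simp
    then show "0 \<le> 1 / reg * (3 * \<kappa>0 * \<rho>)" using reg k0 by simp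
  qed (use T t_def in auto)
  with qp e1 e2 show ?thesis by simp
qed

lemma Q_bound:
  assumes ed: "eigendecay D mu k lam phi C Cphi p g" and p: "p > 1" and C: "C > 0"
    and g: "g \<ge> 1" and pd: "pd_kernel D k" and sub: "set zs \<subseteq> D" and reg: "reg > 0"
    and T: "length zs \<le> T"
  defines "W \<equiv> the (mat_inverse (kmat k zs + reg \<cdot>\<^sub>m 1\<^sub>m (length zs)))"
  shows "\<bar>\<Sum>i<length zs. \<Sum>j<length zs. (lam m * phi m (zs!i)) * W $$ (i,j) * (lam n * phi n (zs!j))\<bar>
     \<le> real T * real T * ((1/reg) * (C * Cphi) * (C * Cphi))"
proof -
  define t where "t = length zs"
  obtain W' where W': "mat_inverse (kmat k zs + reg \<cdot>\<^sub>m 1\<^sub>m (length zs)) = Some W'"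
      "W' \<in> carrier_mat t t" "(kmat k zs + reg \<cdot>\<^sub>m 1\<^sub>m (length zs)) * W' = 1\<^sub>m (length zs)"
    using inverse_exists[OF pd sub reg] t_def by blast
  have WW: "W = W'" using W' unfolding W_def by simp
  have Wb: "\<bar>W $$ (i,j)\<bar> \<le> 1/reg" if "i < t" "j < t" for i j
    using W_bound[OF pd sub reg, of W' i j] W' WW that t_def by simp
  have gp: "real g powr (-p) \<le> 1" using gp_le[OF g p] .
  have lamC: "lam m' \<le> C" for m'
  proof -
    have "lam m' \<le> C * real g powr (-p) * (real m' + 1) powr (-p)" by (rule lam_bound[OF ed p g])
    also have "\<dots> \<le> C * 1 * 1"
      using gp C p by (intro mult_mono mult_left_mono) (auto intro: powr_le1)
    finally show ?thesis by simp
  qed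
  have lampos: "lam m' > 0" for m' using ed unfolding eigendecay_def by blast
  have phib: "\<bar>phi m' x\<bar> \<le> Cphi" if "x \<in> D" for m' x using ed that unfolding eigendecay_def by blast
  have Bb: "\<bar>lam m' * phi m' (zs!i)\<bar> \<le> C * Cphi" if "i < t" for m' i
  proof -
    have "zs!i \<in> D" using sub that t_def by auto
    then have "\<bar>phi m' (zs!i)\<bar> \<le> Cphi" by (rule phib)
    then show ?thesis using lampos[of m'] lamC[of m'] by (simp add: abs_mult mult_mono)
  qed
  have "\<bar>\<Sum>i<t. \<Sum>j<t. (lam m * phi m (zs!i)) * W $$ (i,j) * (lam n * phi n (zs!j))\<bar>
      \<le> (\<Sum>i<t. \<Sum>j<t. \<bar>(lam m * phi m (zs!i)) * W $$ (i,j) * (lam n * phi n (zs!j))\<bar>)"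
    by (rule order_trans[OF sum_abs]) (intro sum_mono sum_abs)
  also have "\<dots> \<le> (\<Sum>i<t. \<Sum>j<t. (C * Cphi) * (1/reg) * (C * Cphi))"
  proof (intro sum_mono)
    fix i j assume ij: "i \<in> {..<t}" "j \<in> {..<t}"
    have "\<bar>(lam m * phi m (zs!i)) * W $$ (i,j) * (lam n * phi n (zs!j))\<bar>
       = \<bar>lam m * phi m (zs!i)\<bar> * \<bar>W $$ (i,j)\<bar> * \<bar>lam n * phi n (zs!j)\<bar>" by (simp add: abs_mult)
    also have "\<dots> \<le> (C * Cphi) * (1/reg) * (C * Cphi)"
      using Bb[of i m] Bb[of j n] Wb[of i j] ij order_trans[OF abs_ge_zero Bb[of i m]] reg
      by (intro mult_mono) auto
    finally show "\<bar>(lam m * phi m (zs!i)) * W $$ (i,j) * (lam n * phi n (zs!j))\<bar> \<le> (C * Cphi) * (1/reg) * (C * Cphi)" .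
  qed
  also have "\<dots> = real t * real t * ((1/reg) * (C * Cphi) * (C * Cphi))" by (simp add: mult_ac)
  also have "\<dots> \<le> real T * real T * ((1/reg) * (C * Cphi) * (C * Cphi))"
  proof (intro mult_right_mono mult_mono)
    show "0 \<le> 1 / reg * (C * Cphi) * (C * Cphi)" using reg by simp
  qed (use T t_def in auto)
  finally show ?thesis unfolding t_def .
qed

lemma cover_by_labels:
  assumes fin: "finite S" and lab: "\<And>f. f \<in> F \<Longrightarrow> lab f \<in> S"
    and close: "\<And>f g z. f \<in> F \<Longrightarrow> g \<in> F \<Longrightarrow> lab f = lab g \<Longrightarrow> z \<in> D \<Longrightarrow> \<bar>f z - g z\<bar> \<le> eps"
  shows "covering_number F D eps \<noteq> \<infinity> \<and> the_enat (covering_number F D eps) \<le> card S"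
proof -
  define pick where "pick l = (SOME f. f \<in> F \<and> lab f = l)" for l
  define Cv where "Cv = pick ` (lab ` F)"
  have pk: "pick (lab f) \<in> F \<and> lab (pick (lab f)) = lab f" if "f \<in> F" for f
    unfolding pick_def by (rule someI[of _ f]) (use that in auto)
  have sub: "Cv \<subseteq> F" unfolding Cv_def using pk by auto
  have labS: "lab ` F \<subseteq> S" using lab by auto
  have finl: "finite (lab ` F)" using finite_subset[OF labS fin] .
  have fin2: "finite Cv" unfolding Cv_def using finl by simp
  have cardC: "card Cv \<le> card S"
    unfolding Cv_def using card_image_le[OF finl, of pick] card_mono[OF fin labS] by linarith
  have cov: "\<forall>f\<in>F. \<exists>g\<in>Cv. \<forall>z\<in>D. \<bar>f z - g z\<bar> \<le> eps"
  proof
    fix f assume f: "f \<in> F"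
    show "\<exists>g\<in>Cv. \<forall>z\<in>D. \<bar>f z - g z\<bar> \<le> eps"
      using pk[OF f] f close[of f "pick (lab f)"] unfolding Cv_def by auto
  qed
  have "covering_number F D eps \<le> enat (card Cv)"
    unfolding covering_number_def using sub fin2 cov by (intro Inf_lower) auto
  then obtain n where n: "covering_number F D eps = enat n" "n \<le> card Cv"
    by (cases "covering_number F D eps") auto
  then show ?thesis using cardC by simp
qed

lemma pair_close:
  fixes QA QB :: "nat \<Rightarrow> nat \<Rightarrow> real" and M :: nat
  assumes phib: "\<And>m. \<bar>phi m z\<bar> \<le> Cphi"
    and a1: "\<bar>q1 - (\<Sum>m<M. \<Sum>n<M. phi m z * phi n z * QA m n)\<bar> \<le> E"
    and a2: "\<bar>q2 - (\<Sum>m<M. \<Sum>n<M. phi m z * phi n z * QB m n)\<bar> \<le> E"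
    and dq: "\<And>m n. m < M \<Longrightarrow> n < M \<Longrightarrow> \<bar>QA m n - QB m n\<bar> \<le> \<delta>"
  shows "\<bar>sqrt (kk - q1) - sqrt (kk - q2)\<bar> \<le> sqrt (2 * (2 * E + real M * real M * (Cphi\<^sup>2 * \<delta>)))"
proof -
  have "\<bar>(\<Sum>m<M. \<Sum>n<M. phi m z * phi n z * QA m n) - (\<Sum>m<M. \<Sum>n<M. phi m z * phi n z * QB m n)\<bar>
      = \<bar>\<Sum>m<M. \<Sum>n<M. phi m z * phi n z * (QA m n - QB m n)\<bar>"
    by (simp add: sum_subtractf algebra_simps)
  also have "\<dots> \<le> (\<Sum>m<M. \<Sum>n<M. \<bar>phi m z * phi n z * (QA m n - QB m n)\<bar>)"
    by (rule order_trans[OF sum_abs]) (intro sum_mono sum_abs)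
  also have "\<dots> \<le> (\<Sum>m<M. \<Sum>n<M. Cphi\<^sup>2 * \<delta>)"
  proof (intro sum_mono)
    fix m n assume mn: "m \<in> {..<M}" "n \<in> {..<M}"
    have c0: "0 \<le> Cphi" using phib[of m] by (metis abs_ge_zero order_trans)
    have "\<bar>phi m z * phi n z * (QA m n - QB m n)\<bar> = \<bar>phi m z\<bar> * \<bar>phi n z\<bar> * \<bar>QA m n - QB m n\<bar>"
      by (simp add: abs_mult)
    also have "\<dots> \<le> Cphi * Cphi * \<delta>"
      using phib[of m] phib[of n] dq[of m n] mn c0 by (intro mult_mono) auto
    finally show "\<bar>phi m z * phi n z * (QA m n - QB m n)\<bar> \<le> Cphi\<^sup>2 * \<delta>" by (simp add: power2_eq_square)
  qed
  also have "\<dots> = real M * real M * (Cphi\<^sup>2 * \<delta>)" by simp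
  finally have "\<bar>(\<Sum>m<M. \<Sum>n<M. phi m z * phi n z * QA m n) - (\<Sum>m<M. \<Sum>n<M. phi m z * phi n z * QB m n)\<bar>
     \<le> real M * real M * (Cphi\<^sup>2 * \<delta>)" .
  with a1 a2 have "\<bar>(kk - q1) - (kk - q2)\<bar> \<le> 2 * E + real M * real M * (Cphi\<^sup>2 * \<delta>)"
    by linarith
  then have "sqrt (2 * \<bar>(kk - q1) - (kk - q2)\<bar>) \<le> sqrt (2 * (2 * E + real M * real M * (Cphi\<^sup>2 * \<delta>)))"
    by simp
  with sqrt_diff_bound[of "kk - q1" "kk - q2"] show ?thesis by linarith
qed

lemma M_props:
  fixes c x p :: real
  assumes p: "p > 1" and cx: "c * x > 0"
  defines "M \<equiv> nat \<lfloor>(c * x) powr (1/(p-1))\<rfloor>"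
  shows "(real M + 1) powr (1-p) \<le> 1 / (c * x)" "real M * real M \<le> (c * x) powr (2/(p-1))"
proof -
  define y where "y = (c * x) powr (1/(p-1))"
  have y0: "y > 0" unfolding y_def using cx powr_gt_zero by (metis less_irrefl)
  have My: "real M = of_int \<lfloor>y\<rfloor>" unfolding M_def y_def[symmetric] using y0 by simp
  have M1: "real M + 1 > y" using My by linarith
  have M2: "real M \<le> y" using My by linarith
  have "(real M + 1) powr (p-1) \<ge> y powr (p-1)"
    using M1 y0 p by (intro powr_mono2) auto
  moreover have "y powr (p-1) = c * x" unfolding y_def using cx p by (simp add: powr_powr)
  ultimately have A: "(real M + 1) powr (p-1) \<ge> c * x" by simp
  have "(real M + 1) powr (1-p) = 1 / (real M + 1) powr (p-1)"
    by (simp add: powr_minus_divide[symmetric])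
  also have "\<dots> \<le> 1 / (c * x)" using A cx by (intro divide_left_mono) auto
  finally show "(real M + 1) powr (1-p) \<le> 1 / (c * x)" .
  have "real M * real M \<le> y * y" using M2 by (intro mult_mono) auto
  also have "y * y = (c * x) powr (2/(p-1))" unfolding y_def
    by (simp add: powr_add[symmetric])
  finally show "real M * real M \<le> (c * x) powr (2/(p-1))" .
qed

lemma ln_bound_aux:
  fixes K2 e A :: real
  assumes K2: "K2 \<ge> 1" and e: "e \<ge> 1" and A: "A \<ge> 0" and Y: "0 < Y" "Y \<le> K2 * e powr A"
  shows "ln Y \<le> (ln K2 + A) * (1 + ln e)"
proof -
  have "ln Y \<le> ln (K2 * e powr A)" using Y K2 e by simp
  also have "\<dots> = ln K2 + A * ln e" using K2 e by (simp add: ln_mult ln_powr)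
  also have "\<dots> \<le> (ln K2 + A) * (1 + ln e)"
  proof -
    have "ln K2 \<ge> 0" "ln e \<ge> 0" using K2 e by auto
    then show ?thesis using A by (simp add: algebra_simps)
  qed
  finally show ?thesis .
qed

lemma aux_lin:
  fixes E Y e :: real
  shows "E \<le> e / 8 \<Longrightarrow> Y \<le> e / 4 \<Longrightarrow> 2 * (2 * E + Y) \<le> e"
  by (simp add: field_simps)

lemma aux_field2:
  fixes c t m e :: real
  assumes "c > 0" "t > 0"
  shows "m * (c\<^sup>2 * (e / (4 * t * c\<^sup>2))) = e / 4 * (m / t)"
  using assms by (simp add: field_simps)

lemma aux_field:
  fixes k r t e :: real
  assumes "k > 0" "r > 0" "t > 0"
  shows "(1/r) * (3 * k * (k * e / (24 * t * k * k / r))) = e / 8 * (1 / t)"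
  using assms by (simp add: field_simps)

theorem lemma6:
  fixes D :: "'a::metric_space set" and mu :: "'a measure"
    and p C Cphi reg :: real and T :: nat
  assumes "compact D" and "p > 1" and "C > 0" and "Cphi > 0" and "reg > 0"
  shows "\<exists>K. \<forall>(G :: 'g monoid) k lam phi eps.
     group G \<and> finite (carrier G) \<and>
     continuous_on (D \<times> D) (\<lambda>(x, y). k x y) \<and> pd_kernel D k \<and>
     eigendecay D mu k lam phi C Cphi p (card (carrier G)) \<and> 0 < eps \<and> eps < 1
     \<longrightarrow> covering_number (post_sd_class D k reg T) D eps \<noteq> \<infinity> \<and>
         ln (real (the_enat (covering_number (post_sd_class D k reg T) D eps)))
           \<le> K * (1 / (eps\<^sup>2 * real (card (carrier G)) powr p)) powr (2 / (p - 1)) * (1 + ln (1 / eps))"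
proof -
  note p = \<open>p > 1\<close> and C = \<open>C > 0\<close> and Cphi = \<open>Cphi > 0\<close> and reg = \<open>reg > 0\<close>
  define a where "a = 2 / (p-1)"
  define \<kappa>0 where "\<kappa>0 = Cphi\<^sup>2 * C * (2 powr p / (p-1))"
  define c where "c = 24 * (real T * real T + 1) * \<kappa>0 * \<kappa>0 / reg"
  define R where "R = real T * real T * ((1/reg) * (C * Cphi) * (C * Cphi))"
  define K2 where "K2 = 8 * R * Cphi\<^sup>2 * (c powr a + 1) + 3"
  define K3 where "K3 = ln K2 + (2 * a + 2)"
  define K where "K = c powr a * K3"
  have a0: "a > 0" unfolding a_def using p by simp
  have k0: "\<kappa>0 > 0" unfolding \<kappa>0_def using p C Cphi by simp
  have TT: "0 < real T * real T + 1" by (intro add_nonneg_pos) auto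
  have c0: "c > 0" unfolding c_def using k0 reg TT by (intro divide_pos_pos mult_pos_pos) auto
  have R0: "R \<ge> 0" unfolding R_def using reg by simp
  have K2ge: "K2 \<ge> 3" unfolding K2_def using R0 by simp
  show ?thesis
  proof (intro exI[of _ K] allI impI)
    fix G :: "'g monoid" and k lam phi and eps :: real
    assume H: "group G \<and> finite (carrier G) \<and>
     continuous_on (D \<times> D) (\<lambda>(x, y). k x y) \<and> pd_kernel D k \<and>
     eigendecay D mu k lam phi C Cphi p (card (carrier G)) \<and> 0 < eps \<and> eps < 1"
    define g where "g = card (carrier G)"
    have pd: "pd_kernel D k" using H by blast
    have ed: "eigendecay D mu k lam phi C Cphi p g" using H g_def by blast
    have eps: "0 < eps" "eps < 1" using H by auto
    have g1: "g \<ge> 1"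
    proof -
      have "\<one>\<^bsub>G\<^esub> \<in> carrier G" using H by (simp add: group.is_monoid monoid.one_closed)
      then have "carrier G \<noteq> {}" by auto
      then show ?thesis unfolding g_def using H by (simp add: Suc_le_eq card_gt_0_iff)
    qed
    have gp1: "real g powr p \<ge> 1" using g1 p by (intro ge_one_powr_ge_zero) auto
    define x where "x = 1 / (eps\<^sup>2 * real g powr p)"
    have x0: "x > 0" unfolding x_def using eps gp1 g1 by (intro divide_pos_pos mult_pos_pos) auto
    define e where "e = 1 / eps"
    have e1: "e \<ge> 1" unfolding e_def using eps by simp
    have xe: "x \<le> e powr 2"
    proof -
      have "eps\<^sup>2 * 1 \<le> eps\<^sup>2 * real g powr p" using gp1 by (intro mult_left_mono) auto
      moreover have "0 < eps\<^sup>2 * real g powr p * eps\<^sup>2" using eps gp1 g1 by (intro mult_pos_pos) auto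
      ultimately have "x \<le> 1 / eps\<^sup>2" unfolding x_def by (intro divide_left_mono) auto
      also have "\<dots> = e powr 2" unfolding e_def using eps by (simp add: powr_divide power_one_over)
      finally show ?thesis .
    qed
    define M where "M = nat \<lfloor>(c * x) powr (1/(p-1))\<rfloor>"
    have cx0: "c * x > 0" using c0 x0 by simp
    have MP1: "(real M + 1) powr (1-p) \<le> 1 / (c * x)" and MP2: "real M * real M \<le> (c * x) powr a"
      using M_props[OF p cx0] unfolding M_def a_def by auto
    define \<delta> where "\<delta> = eps\<^sup>2 / (4 * (real M * real M + 1) * Cphi\<^sup>2)"
    have MM: "0 < real M * real M + 1" by (intro add_nonneg_pos) auto
    have \<delta>0: "\<delta> > 0" unfolding \<delta>_def using eps Cphi MM by (intro divide_pos_pos mult_pos_pos) auto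
    define L where "L = \<lceil>R / \<delta>\<rceil>"
    define Zs where "Zs = {zs. distinct zs \<and> set zs \<subseteq> D \<and> length zs \<le> T}"
    define Wz where "Wz zs = the (mat_inverse (kmat k zs + reg \<cdot>\<^sub>m 1\<^sub>m (length zs)))" for zs
    define Qz where "Qz zs m n = (\<Sum>i<length zs. \<Sum>j<length zs. (lam m * phi m (zs!i)) * Wz zs $$ (i,j) * (lam n * phi n (zs!j)))" for zs m n
    define F where "F = post_sd_class D k reg T"
    define zof where "zof f = (SOME zs. zs \<in> Zs \<and> f = post_sd k reg zs)" for f
    define lab where "lab f = restrict (\<lambda>(m,n). \<lfloor>Qz (zof f) m n / \<delta>\<rfloor>) ({..<M} \<times> {..<M})" for f
    define S where "S = PiE ({..<M} \<times> {..<M}) (\<lambda>_. {-L..L})"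
    have zof: "zof f \<in> Zs \<and> f = post_sd k reg (zof f)" if "f \<in> F" for f
    proof -
      from that obtain zs where "zs \<in> Zs" "f = post_sd k reg zs"
        unfolding F_def post_sd_class_def Zs_def by auto
      then show ?thesis unfolding zof_def by (rule someI[of _ zs, OF conjI])
    qed
    have ZsD: "set zs \<subseteq> D" "length zs \<le> T" if "zs \<in> Zs" for zs using that Zs_def by auto
    define \<rho> where "\<rho> = Cphi\<^sup>2 * C * real g powr (-p) * (2 powr p * (real M + 1) powr (1-p) / (p-1))"
    define E where "E = real T * real T * ((1/reg) * (3 * \<kappa>0 * \<rho>))"
    have approx: "\<bar>scalar_prod (kvec k zs z) (mult_mat_vec (Wz zs) (kvec k zs z)) - (\<Sum>m<M. \<Sum>n<M. phi m z * phi n z * Qz zs m n)\<bar> \<le> E"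
      if "zs \<in> Zs" "z \<in> D" for zs z
      using zs_approx[OF ed p C g1 pd ZsD(1)[OF that(1)] reg that(2) ZsD(2)[OF that(1)], of M]
      unfolding E_def \<rho>_def \<kappa>0_def Wz_def Qz_def by simp
    have Qb: "\<bar>Qz zs m n\<bar> \<le> R" if "zs \<in> Zs" for zs m n
      using Q_bound[OF ed p C g1 pd ZsD(1)[OF that] reg ZsD(2)[OF that]]
      unfolding R_def Qz_def Wz_def by simp
    have \<rho>b: "\<rho> \<le> \<kappa>0 * eps\<^sup>2 / c"
    proof -
      have "\<rho> = \<kappa>0 * real g powr (-p) * (real M + 1) powr (1-p)" unfolding \<rho>_def \<kappa>0_def by simp
      also have "\<dots> \<le> \<kappa>0 * real g powr (-p) * (1 / (c * x))"
        using MP1 k0 by (intro mult_left_mono) auto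
      also have "\<dots> = \<kappa>0 * eps\<^sup>2 / c"
        unfolding x_def using c0 eps gp1 g1 by (simp add: powr_minus field_simps)
      finally show ?thesis .
    qed
    have Eb: "E \<le> eps\<^sup>2 / 8"
    proof -
      have "E \<le> real T * real T * ((1/reg) * (3 * \<kappa>0 * (\<kappa>0 * eps\<^sup>2 / c)))"
        unfolding E_def using \<rho>b k0 reg by (intro mult_left_mono) auto
      also have "(1/reg) * (3 * \<kappa>0 * (\<kappa>0 * eps\<^sup>2 / c)) = eps\<^sup>2 / 8 * (1 / (real T * real T + 1))"
        unfolding c_def using aux_field[OF k0 reg TT] by simp
      also have "real T * real T * (eps\<^sup>2 / 8 * (1 / (real T * real T + 1))) = eps\<^sup>2 / 8 * (real T * real T / (real T * real T + 1))"
        by simp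
      also have "\<dots> \<le> eps\<^sup>2 / 8 * 1"
        using TT by (intro mult_left_mono) (simp_all add: divide_le_eq_1_pos)
      finally show ?thesis by simp
    qed
    have \<delta>b: "real M * real M * (Cphi\<^sup>2 * \<delta>) \<le> eps\<^sup>2 / 4"
    proof -
      have "real M * real M * (Cphi\<^sup>2 * \<delta>) = eps\<^sup>2 / 4 * (real M * real M / (real M * real M + 1))"
        unfolding \<delta>_def using aux_field2[OF Cphi MM, of "real M * real M" "eps\<^sup>2"] by simp
      also have "\<dots> \<le> eps\<^sup>2 / 4 * 1"
        using MM by (intro mult_left_mono) (simp_all add: divide_le_eq_1_pos)
      finally show ?thesis by simp
    qed
    have labS: "lab f \<in> S" if "f \<in> F" for f
    proof -
      have "\<lfloor>Qz (zof f) m n / \<delta>\<rfloor> \<in> {-L..L}" for m n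
      proof -
        have q: "\<bar>Qz (zof f) m n\<bar> \<le> R" using Qb zof[OF that] by blast
        have "\<bar>Qz (zof f) m n / \<delta>\<bar> \<le> R / \<delta>" using q \<delta>0 by (simp add: divide_right_mono)
        then have "- (R/\<delta>) \<le> Qz (zof f) m n / \<delta>" "Qz (zof f) m n / \<delta> \<le> R / \<delta>" by linarith+
        moreover have "R / \<delta> \<le> of_int L" unfolding L_def by simp
        ultimately have "- of_int L \<le> Qz (zof f) m n / \<delta>" "Qz (zof f) m n / \<delta> \<le> of_int L" by linarith+
        then show ?thesis by (simp add: le_floor_iff floor_le_iff)
      qed
      then show ?thesis unfolding lab_def S_def by auto
    qed
    have close: "\<bar>f z - h z\<bar> \<le> eps" if "f \<in> F" "h \<in> F" "lab f = lab h" "z \<in> D" for f h z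
    proof -
      define z1 where "z1 = zof f"
      define z2 where "z2 = zof h"
      have z1: "z1 \<in> Zs" "f = post_sd k reg z1" using zof[OF that(1)] z1_def by auto
      have z2: "z2 \<in> Zs" "h = post_sd k reg z2" using zof[OF that(2)] z2_def by auto
      have dq: "\<bar>Qz z1 m n - Qz z2 m n\<bar> \<le> \<delta>" if "m < M" "n < M" for m n
      proof -
        have "lab f (m,n) = lab h (m,n)" using \<open>lab f = lab h\<close> by simp
        then have fl: "\<lfloor>Qz z1 m n / \<delta>\<rfloor> = \<lfloor>Qz z2 m n / \<delta>\<rfloor>"
          using that unfolding lab_def z1_def z2_def by simp
        have "\<bar>Qz z1 m n / \<delta> - Qz z2 m n / \<delta>\<bar> < 1"
          using fl by linarith
        then have "\<bar>Qz z1 m n - Qz z2 m n\<bar> / \<delta> < 1" using \<delta>0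
          by (simp add: diff_divide_distrib[symmetric])
        then show ?thesis using \<delta>0 by (simp add: field_simps)
      qed
      have phib: "\<bar>phi m z\<bar> \<le> Cphi" for m using ed \<open>z \<in> D\<close> unfolding eigendecay_def by blast
      have "\<bar>sqrt (k z z - scalar_prod (kvec k z1 z) (mult_mat_vec (Wz z1) (kvec k z1 z)))
           - sqrt (k z z - scalar_prod (kvec k z2 z) (mult_mat_vec (Wz z2) (kvec k z2 z)))\<bar>
         \<le> sqrt (2 * (2 * E + real M * real M * (Cphi\<^sup>2 * \<delta>)))"
      proof (rule pair_close[where phi=phi and z=z and QA="Qz z1" and QB="Qz z2"])
        show "\<bar>phi m z\<bar> \<le> Cphi" for m by (rule phib)
        show "\<bar>scalar_prod (kvec k z1 z) (mult_mat_vec (Wz z1) (kvec k z1 z)) - (\<Sum>m<M. \<Sum>n<M. phi m z * phi n z * Qz z1 m n)\<bar> \<le> E"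
          by (rule approx[OF z1(1) \<open>z \<in> D\<close>])
        show "\<bar>scalar_prod (kvec k z2 z) (mult_mat_vec (Wz z2) (kvec k z2 z)) - (\<Sum>m<M. \<Sum>n<M. phi m z * phi n z * Qz z2 m n)\<bar> \<le> E"
          by (rule approx[OF z2(1) \<open>z \<in> D\<close>])
        show "\<bar>Qz z1 m n - Qz z2 m n\<bar> \<le> \<delta>" if "m < M" "n < M" for m n using dq that by blast
      qed
      also have "\<dots> \<le> sqrt (eps\<^sup>2)"
        using aux_lin[OF Eb \<delta>b] by (intro real_sqrt_le_mono)
      also have "\<dots> = eps" using eps by simp
      finally show ?thesis using z1(2) z2(2) unfolding post_sd_def Wz_def by simp
    qed
    have finS: "finite S" unfolding S_def by (simp add: finite_PiE)
    from cover_by_labels[OF finS, of F lab D eps] labS close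
    have cov: "covering_number F D eps \<noteq> \<infinity>" "the_enat (covering_number F D eps) \<le> card S"
      by auto
    have L0: "L \<ge> 0" unfolding L_def using divide_nonneg_pos[OF R0 \<delta>0] by simp
    have cardS: "card S = nat (2*L+1) ^ (M*M)"
      unfolding S_def by (simp add: card_PiE)
    have cardS': "real (card S) = (2 * real_of_int L + 1) ^ (M*M)"
      using L0 unfolding cardS by simp
    have cardS1: "real (card S) \<ge> 1" using L0 unfolding cardS' by simp
    have lnN: "ln (real (the_enat (covering_number F D eps))) \<le> ln (real (card S))"
    proof (cases "the_enat (covering_number F D eps) = 0")
      case True then show ?thesis using cardS1 by simp
    next
      case False then show ?thesis using cov(2) by simp
    qed
    have lnS: "ln (real (card S)) = real M * real M * ln (2 * real_of_int L + 1)"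
      unfolding cardS' using L0 by (simp add: ln_realpow)
    have Lb: "2 * real_of_int L + 1 \<le> K2 * e powr (2*a+2)"
    proof -
      have "of_int L \<le> R / \<delta> + 1" unfolding L_def by linarith
      have xa: "x powr a \<le> e powr (2*a)"
        using xe x0 a0 by (metis powr_mono2 powr_powr less_imp_le mult.commute)
      have "real M * real M + 1 \<le> c powr a * x powr a + 1"
        using MP2 c0 x0 by (simp add: powr_mult)
      also have "\<dots> \<le> c powr a * e powr (2*a) + 1 * e powr (2*a)"
        using xa e1 a0 by (intro add_mono mult_left_mono) (auto intro: ge_one_powr_ge_zero)
      finally have Mb: "real M * real M + 1 \<le> (c powr a + 1) * e powr (2*a)" by (simp add: algebra_simps)
      have "R / \<delta> = 4 * R * Cphi\<^sup>2 * (real M * real M + 1) * e powr 2"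
        unfolding \<delta>_def e_def using eps Cphi by (simp add: powr_divide power_one_over field_simps)
      also have "\<dots> \<le> 4 * R * Cphi\<^sup>2 * ((c powr a + 1) * e powr (2*a)) * e powr 2"
        using Mb R0 by (intro mult_right_mono mult_left_mono) auto
      also have "\<dots> = 4 * R * Cphi\<^sup>2 * (c powr a + 1) * e powr (2*a+2)"
        by (simp add: powr_add)
      finally have Rd: "R / \<delta> \<le> 4 * R * Cphi\<^sup>2 * (c powr a + 1) * e powr (2*a+2)" .
      have E1: "e powr (2*a+2) \<ge> 1" using e1 a0 by (intro ge_one_powr_ge_zero) auto
      define X where "X = R * Cphi\<^sup>2 * (c powr a + 1) * e powr (2*a+2)"
      have Rd': "R / \<delta> \<le> 4 * X" using Rd unfolding X_def by (simp add: mult_ac)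
      have "2 * real_of_int L + 1 \<le> 8 * X + 3 * e powr (2*a+2)"
        using \<open>of_int L \<le> R / \<delta> + 1\<close> Rd' E1 by linarith
      also have "\<dots> = K2 * e powr (2*a+2)" unfolding K2_def X_def by (simp add: algebra_simps)
      finally show ?thesis .
    qed
    have lnL: "ln (2 * real_of_int L + 1) \<le> K3 * (1 + ln e)"
      unfolding K3_def using ln_bound_aux[of K2 e "2*a+2" "2 * real_of_int L + 1"] K2ge e1 a0 L0 Lb by simp
    have lnL0: "ln (2 * real_of_int L + 1) \<ge> 0" using L0 by simp
    have "ln (real (the_enat (covering_number F D eps))) \<le> real M * real M * ln (2 * real_of_int L + 1)"
      using lnN lnS by simp
    also have "\<dots> \<le> (c powr a * x powr a) * (K3 * (1 + ln e))"
    proof (rule mult_mono)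
      show "real M * real M \<le> c powr a * x powr a" using MP2 c0 x0 by (simp add: powr_mult)
      show "0 \<le> c powr a * x powr a" by simp
    qed (use lnL lnL0 in auto)
    also have "\<dots> = K * x powr a * (1 + ln e)" unfolding K_def by (simp add: algebra_simps)
    finally have fin: "ln (real (the_enat (covering_number F D eps))) \<le> K * x powr a * (1 + ln e)" .
    show "covering_number (post_sd_class D k reg T) D eps \<noteq> \<infinity> \<and>
         ln (real (the_enat (covering_number (post_sd_class D k reg T) D eps)))
           \<le> K * (1 / (eps\<^sup>2 * real (card (carrier G)) powr p)) powr (2 / (p - 1)) * (1 + ln (1 / eps))"
      using cov(1) fin unfolding F_def x_def a_def e_def g_def by simp
  qed
qed

end
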